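(* Let $W_i=V_i\epsilon_i$, $i=1,\dots,n$, with $V_i\sim\mathcal M[\underline\sigma,\overline\sigma]$ and $\epsilon_i\sim N(0,1)$. Then $$V_1\dashrightarrow\epsilon_1\dashrightarrow V_2\dashrightarrow\epsilon_2\dashrightarrow\cdots\dashrightarrow V_n\dashrightarrow\epsilon_n$$ holds if and only if both (F1) $(V_1,\epsilon_1)\dashrightarrow(V_2,\epsilon_2)\dashrightarrow\cdots\dashrightarrow(V_n,\epsilon_n)$ and (F2) $V_i\dashrightarrow\epsilon_i$ for $i=1,\dots,n$ hold.
   Context: Sublinear expectation space $(\Omega,\mathcal H,\hat{\mathbb E})$, $\hat{\mathbb E}[X]=\sup_{Q\in\mathcal P}E_Q[X]$. $C_{b,Lip}$: bounded Lipschitz functions. For random vectors $X,Y$, $X\dashrightarrow Y$ ($Y$ independent from $X$) means $\hat{\mathbb E}[\varphi(X,Y)]=\hat{\mathbb E}[\hat{\mathbb E}[\varphi(x,Y)]_{x=X}]$ for all $\varphi\in C_{b,Lip}$; $X_1\dashrightarrow\cdots\dashrightarrow X_n$ means $(X_1,\dots,X_i)\dashrightarrow X_{i+1}$ for $i=1,\dots,n-1$. $V\sim\mathcal M[\underline\sigma,\overline\sigma]$: $\hat{\mathbb E}[\varphi(V)]=\max_{v\in[\underline\sigma,\overline\sigma]}\varphi(v)$ for locally Lipschitz-growth $\varphi$. $\epsilon\sim N(0,1)$: $\hat{\mathbb E}[\varphi(\epsilon)]=E[\varphi(Z)]$, $Z$ classical standard normal. *)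

theory Defs
  imports "HOL-Probability.Probability"
begin

definition sublin_E :: "'w measure set \<Rightarrow> ('w \<Rightarrow> real) \<Rightarrow> real" where
  "sublin_E P X = (SUP Q\<in>P. integral\<^sup>L Q X)"

definition list_dist :: "real list \<Rightarrow> real list \<Rightarrow> real" where
  "list_dist x y = sqrt (\<Sum>i<length x. (x ! i - y ! i)\<^sup>2)"

definition cblip :: "nat \<Rightarrow> (real list \<Rightarrow> real) \<Rightarrow> bool" where
  "cblip d \<phi> \<longleftrightarrow>
     (\<exists>B. \<forall>x. length x = d \<longrightarrow> \<bar>\<phi> x\<bar> \<le> B) \<and>
     (\<exists>L. \<forall>x y. length x = d \<longrightarrow> length y = d \<longrightarrow> \<bar>\<phi> x - \<phi> y\<bar> \<le> L * list_dist x y)"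

definition loc_lip_growth :: "(real \<Rightarrow> real) \<Rightarrow> bool" where
  "loc_lip_growth \<phi> \<longleftrightarrow>
     (\<exists>C k. \<forall>x y. \<bar>\<phi> x - \<phi> y\<bar> \<le> C * (1 + \<bar>x\<bar> ^ k + \<bar>y\<bar> ^ k) * \<bar>x - y\<bar>)"

text \<open>Y (dimension n) is independent from X (dimension m): X \<dashrightarrow> Y.\<close>
definition sl_indep ::
  "'w measure set \<Rightarrow> ('w \<Rightarrow> real list) \<Rightarrow> nat \<Rightarrow> ('w \<Rightarrow> real list) \<Rightarrow> nat \<Rightarrow> bool" where
  "sl_indep P X m Y n \<longleftrightarrow>
     (\<forall>\<phi>. cblip (m + n) \<phi> \<longrightarrow>
        sublin_E P (\<lambda>\<omega>. \<phi> (X \<omega> @ Y \<omega>)) =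
        sublin_E P (\<lambda>\<omega>. sublin_E P (\<lambda>\<omega>'. \<phi> (X \<omega> @ Y \<omega>'))))"

text \<open>X_1 \<dashrightarrow> X_2 \<dashrightarrow> ... \<dashrightarrow> X_N (indices 1..N, X_j of dimension dd j):
  (X_1,...,X_i) \<dashrightarrow> X_{i+1} for i = 1..N-1.\<close>
definition seq_indep ::
  "'w measure set \<Rightarrow> (nat \<Rightarrow> 'w \<Rightarrow> real list) \<Rightarrow> (nat \<Rightarrow> nat) \<Rightarrow> nat \<Rightarrow> bool" where
  "seq_indep P X dd N \<longleftrightarrow>
     (\<forall>i. 1 \<le> i \<and> i < N \<longrightarrow>
        sl_indep P (\<lambda>\<omega>. concat (map (\<lambda>j. X j \<omega>) [1..<i+1])) (\<Sum>j\<in>{1..i}. dd j)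
                   (X (i+1)) (dd (i+1)))"

definition in_H :: "'w measure set \<Rightarrow> ('w \<Rightarrow> real) \<Rightarrow> bool" where
  "in_H P X \<longleftrightarrow> (\<forall>Q\<in>P. integrable Q X) \<and> bdd_above ((\<lambda>Q. integral\<^sup>L Q X) ` P)"

definition maximal_distributed ::
  "'w measure set \<Rightarrow> ('w \<Rightarrow> real) \<Rightarrow> real \<Rightarrow> real \<Rightarrow> bool" where
  "maximal_distributed P V lo hi \<longleftrightarrow>
     (\<forall>\<phi>. loc_lip_growth \<phi> \<longrightarrow>
        in_H P (\<lambda>\<omega>. \<phi> (V \<omega>)) \<and> sublin_E P (\<lambda>\<omega>. \<phi> (V \<omega>)) = (SUP v\<in>{lo..hi}. \<phi> v))"

definition std_normal_distributed :: "'w measure set \<Rightarrow> ('w \<Rightarrow> real) \<Rightarrow> bool" where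
  "std_normal_distributed P e \<longleftrightarrow>
     (\<forall>\<phi>. loc_lip_growth \<phi> \<longrightarrow>
        in_H P (\<lambda>\<omega>. \<phi> (e \<omega>)) \<and>
        sublin_E P (\<lambda>\<omega>. \<phi> (e \<omega>)) = (\<integral>x. \<phi> x * std_normal_density x \<partial>lborel))"

end

theory Submission
  imports Defs
begin

definition sqd :: "real list \<Rightarrow> real list \<Rightarrow> real" where
  "sqd x y = sum_list (map (\<lambda>(a,b). (a-b)\<^sup>2) (zip x y))"

lemma list_dist_sqd: "length x = length y \<Longrightarrow> list_dist x y = sqrt (sqd x y)"
  unfolding list_dist_def sqd_def
  by (simp add: sum_list_sum_nth atLeast0LessThan)

lemma sqd_nonneg: "0 \<le> sqd x y"
  unfolding sqd_def by (rule sum_list_nonneg) auto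

lemma list_dist_nonneg: "0 \<le> list_dist x y"
  unfolding list_dist_def by (simp add: sum_nonneg)

lemma sqd_append: "length x = length y \<Longrightarrow> sqd (x @ u) (y @ v) = sqd x y + sqd u v"
  unfolding sqd_def by simp

lemma sqd_same: "sqd u u = 0"
  unfolding sqd_def by (induction u) auto

lemma sqd_split: "sqd x y = sqd (take d x) (take d y) + sqd (drop d x) (drop d y)"
proof -
  have "sqd x y = sum_list (map (\<lambda>(a,b). (a-b)\<^sup>2) (take d (zip x y) @ drop d (zip x y)))"
    unfolding sqd_def by simp
  thus ?thesis unfolding sqd_def by (simp only: map_append sum_list_append take_zip drop_zip)
qed

lemma sqd_take: "sqd (take d x) (take d y) \<le> sqd x y"
  using sqd_split[of x y d] sqd_nonneg[of "drop d x" "drop d y"] by simp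

lemma sqd_drop: "sqd (drop d x) (drop d y) \<le> sqd x y"
  using sqd_split[of x y d] sqd_nonneg[of "take d x" "take d y"] by simp

lemma cblip_nonneg:
  assumes "cblip d \<phi>"
  shows "\<exists>B L. 0 \<le> L \<and> (\<forall>x. length x = d \<longrightarrow> \<bar>\<phi> x\<bar> \<le> B) \<and>
    (\<forall>x y. length x = d \<longrightarrow> length y = d \<longrightarrow> \<bar>\<phi> x - \<phi> y\<bar> \<le> L * list_dist x y)"
proof -
  obtain B L where B: "\<And>x. length x = d \<Longrightarrow> \<bar>\<phi> x\<bar> \<le> B"
    and L: "\<And>x y. length x = d \<Longrightarrow> length y = d \<Longrightarrow> \<bar>\<phi> x - \<phi> y\<bar> \<le> L * list_dist x y"
    using assms(1) unfolding cblip_def by blast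
  have "\<bar>\<phi> x - \<phi> y\<bar> \<le> max L 0 * list_dist x y" if "length x = d" "length y = d" for x y
  proof -
    have "L * list_dist x y \<le> max L 0 * list_dist x y"
      by (intro mult_right_mono list_dist_nonneg) auto
    thus ?thesis using L[OF that] by linarith
  qed
  moreover have "0 \<le> max L 0" by simp
  ultimately show ?thesis using B by blast
qed

lemma cblipI:
  assumes "\<And>x. length x = d \<Longrightarrow> \<bar>\<phi> x\<bar> \<le> B"
    "\<And>x y. length x = d \<Longrightarrow> length y = d \<Longrightarrow> \<bar>\<phi> x - \<phi> y\<bar> \<le> L * list_dist x y"
  shows "cblip d \<phi>"
  unfolding cblip_def using assms by blast

lemma cblip_take:
  assumes "cblip d \<phi>" "d \<le> d'"
  shows "cblip d' (\<lambda>u. \<phi> (take d u))"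
proof -
  obtain B L where L0: "0 \<le> L" and B: "\<And>x. length x = d \<Longrightarrow> \<bar>\<phi> x\<bar> \<le> B"
    and L: "\<And>x y. length x = d \<Longrightarrow> length y = d \<Longrightarrow> \<bar>\<phi> x - \<phi> y\<bar> \<le> L * list_dist x y"
    using cblip_nonneg[OF assms(1)] by blast
  show ?thesis
  proof (rule cblipI)
    fix x :: "real list" assume "length x = d'" thus "\<bar>\<phi> (take d x)\<bar> \<le> B" using assms(2) by (intro B) simp
  next
    fix x y :: "real list" assume xy: "length x = d'" "length y = d'"
    hence "\<bar>\<phi> (take d x) - \<phi> (take d y)\<bar> \<le> L * list_dist (take d x) (take d y)"
      using assms(2) by (intro L) auto
    also have "\<dots> \<le> L * list_dist x y" using xy assms(2) L0
      by (auto simp: list_dist_sqd intro!: mult_left_mono sqd_take)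
    finally show "\<bar>\<phi> (take d x) - \<phi> (take d y)\<bar> \<le> L * list_dist x y" .
  qed
qed

lemma cblip_drop:
  assumes "cblip k \<phi>"
  shows "cblip (m + k) (\<lambda>u. \<phi> (drop m u))"
proof -
  obtain B L where L0: "0 \<le> L" and B: "\<And>x. length x = k \<Longrightarrow> \<bar>\<phi> x\<bar> \<le> B"
    and L: "\<And>x y. length x = k \<Longrightarrow> length y = k \<Longrightarrow> \<bar>\<phi> x - \<phi> y\<bar> \<le> L * list_dist x y"
    using cblip_nonneg[OF assms(1)] by blast
  show ?thesis
  proof (rule cblipI)
    fix x :: "real list" assume "length x = m + k" thus "\<bar>\<phi> (drop m x)\<bar> \<le> B" by (intro B) simp
  next
    fix x y :: "real list" assume xy: "length x = m + k" "length y = m + k"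
    hence "\<bar>\<phi> (drop m x) - \<phi> (drop m y)\<bar> \<le> L * list_dist (drop m x) (drop m y)"
      by (intro L) auto
    also have "\<dots> \<le> L * list_dist x y" using xy L0
      by (auto simp: list_dist_sqd intro!: mult_left_mono sqd_drop)
    finally show "\<bar>\<phi> (drop m x) - \<phi> (drop m y)\<bar> \<le> L * list_dist x y" .
  qed
qed

lemma list_dist_append_left: "length x = length x' \<Longrightarrow> length u = length v \<Longrightarrow>
   list_dist (x @ u) (x @ v) = list_dist u v"
  by (simp add: list_dist_sqd sqd_append sqd_same)

lemma list_dist_append_right: "length u = length v \<Longrightarrow>
   list_dist (u @ w) (v @ w) = list_dist u v"
  by (simp add: list_dist_sqd sqd_append sqd_same)

lemma cblip_prefix:
  assumes "cblip (m + k) \<phi>" "length x = m"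
  shows "cblip k (\<lambda>u. \<phi> (x @ u))"
proof -
  obtain B L where B: "\<And>x. length x = m + k \<Longrightarrow> \<bar>\<phi> x\<bar> \<le> B"
    and L: "\<And>x y. length x = m + k \<Longrightarrow> length y = m + k \<Longrightarrow> \<bar>\<phi> x - \<phi> y\<bar> \<le> L * list_dist x y"
    using assms(1) unfolding cblip_def by blast
  show ?thesis
  proof (rule cblipI[where B=B and L=L])
    fix u :: "real list" assume "length u = k"
    thus "\<bar>\<phi> (x @ u)\<bar> \<le> B" using assms(2) by (intro B) simp
  next
    fix u v :: "real list" assume uv: "length u = k" "length v = k"
    have "\<bar>\<phi> (x @ u) - \<phi> (x @ v)\<bar> \<le> L * list_dist (x @ u) (x @ v)"
      using uv assms(2) by (intro L) auto
    also have "list_dist (x @ u) (x @ v) = list_dist u v"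
      using uv by (intro list_dist_append_left) auto
    finally show "\<bar>\<phi> (x @ u) - \<phi> (x @ v)\<bar> \<le> L * list_dist u v" .
  qed
qed

lemma list_dist_single: "list_dist (u @ [s]) (u @ [t]) = \<bar>s - t\<bar>"
  by (simp add: list_dist_sqd sqd_append sqd_same) (simp add: sqd_def)

lemma lip_continuous:
  fixes h :: "real \<Rightarrow> real"
  assumes "0 \<le> L" "\<And>s t. \<bar>h s - h t\<bar> \<le> L * \<bar>s - t\<bar>"
  shows "continuous_on UNIV h"
  unfolding continuous_on_iff
proof (intro ballI allI impI)
  fix x and e :: real assume "e > 0"
  show "\<exists>d>0. \<forall>x'\<in>UNIV. dist x' x < d \<longrightarrow> dist (h x') (h x) < e"
  proof (intro exI conjI ballI impI)
    show "e / (L + 1) > 0" using \<open>e > 0\<close> assms(1) by simp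
  next
    fix x' assume "dist x' x < e / (L + 1)"
    hence "\<bar>x' - x\<bar> * (L + 1) < e" using assms(1) by (simp add: dist_real_def field_simps)
    moreover have "\<bar>h x' - h x\<bar> \<le> L * \<bar>x' - x\<bar>" by (rule assms(2))
    moreover have "L * \<bar>x' - x\<bar> \<le> \<bar>x' - x\<bar> * (L + 1)" by (simp add: algebra_simps)
    ultimately show "dist (h x') (h x) < e" by (simp add: dist_real_def)
  qed
qed

locale slE =
  fixes P :: "'w measure set" and M :: "'w measure"
  assumes Pne: "P \<noteq> {}"
    and Pp: "\<And>Q. Q \<in> P \<Longrightarrow> prob_space Q \<and> sets Q = sets M \<and> space Q = space M"
begin

lemma int_bound:
  fixes h :: "'w \<Rightarrow> real"
  assumes "Q \<in> P" "h \<in> borel_measurable M" "\<And>\<omega>. \<bar>h \<omega>\<bar> \<le> B"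
  shows "integrable Q h \<and> \<bar>integral\<^sup>L Q h\<bar> \<le> B"
proof -
  interpret prob_space Q using Pp[OF assms(1)] by blast
  have hm: "h \<in> borel_measurable Q"
  proof -
    have "measurable Q borel = measurable M borel"
      by (rule measurable_cong_sets) (use Pp[OF assms(1)] in auto)
    from this[symmetric] assms(2) show ?thesis by (rule subst[where P="\<lambda>S. h \<in> S"])
  qed
  have int: "integrable Q h"
    by (rule integrable_const_bound[where B=B]) (use assms(3) hm in auto)
  have "\<bar>integral\<^sup>L Q h\<bar> \<le> integral\<^sup>L Q (\<lambda>\<omega>. \<bar>h \<omega>\<bar>)"
    by (rule integral_abs_bound)
  also have "\<dots> \<le> integral\<^sup>L Q (\<lambda>\<omega>. B)"
    by (rule integral_mono) (use int assms(3) in auto)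
  also have "\<dots> = B" by (simp add: prob_space)
  finally show ?thesis using int by simp
qed

lemma sup_bound:
  assumes "\<And>Q. Q \<in> P \<Longrightarrow> \<bar>a Q\<bar> \<le> (B::real)"
  shows "\<bar>(SUP Q\<in>P. a Q)\<bar> \<le> B"
proof -
  obtain Q0 where Q0: "Q0 \<in> P" using Pne by blast
  have bdd: "bdd_above (a ` P)" using assms by (intro bdd_aboveI[where M=B]) force
  have "(SUP Q\<in>P. a Q) \<le> B" using assms Pne by (intro cSUP_least) force+
  moreover have "a Q0 \<le> (SUP Q\<in>P. a Q)" by (rule cSUP_upper[OF Q0 bdd])
  moreover have "- B \<le> a Q0" using assms[OF Q0] by linarith
  ultimately show ?thesis by linarith
qed

lemma sup_diff:
  assumes "\<And>Q. Q \<in> P \<Longrightarrow> \<bar>a Q\<bar> \<le> (B::real)" "\<And>Q. Q \<in> P \<Longrightarrow> \<bar>b Q\<bar> \<le> B"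
    "\<And>Q. Q \<in> P \<Longrightarrow> \<bar>a Q - b Q\<bar> \<le> c"
  shows "\<bar>(SUP Q\<in>P. a Q) - (SUP Q\<in>P. b Q)\<bar> \<le> c"
proof -
  have bdda: "bdd_above (a ` P)" using assms(1) by (intro bdd_aboveI[where M=B]) force
  have bddb: "bdd_above (b ` P)" using assms(2) by (intro bdd_aboveI[where M=B]) force
  have "(SUP Q\<in>P. a Q) \<le> (SUP Q\<in>P. b Q) + c"
  proof (rule cSUP_least[OF Pne])
    fix Q assume Q: "Q \<in> P"
    have "b Q \<le> (SUP Q\<in>P. b Q)" by (rule cSUP_upper[OF Q bddb])
    thus "a Q \<le> (SUP Q\<in>P. b Q) + c" using assms(3)[OF Q] by linarith
  qed
  moreover have "(SUP Q\<in>P. b Q) \<le> (SUP Q\<in>P. a Q) + c"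
  proof (rule cSUP_least[OF Pne])
    fix Q assume Q: "Q \<in> P"
    have "a Q \<le> (SUP Q\<in>P. a Q)" by (rule cSUP_upper[OF Q bdda])
    thus "b Q \<le> (SUP Q\<in>P. a Q) + c" using assms(3)[OF Q] by linarith
  qed
  moreover have "\<And>x y c :: real. x \<le> y + c \<Longrightarrow> y \<le> x + c \<Longrightarrow> \<bar>x - y\<bar> \<le> c" by linarith
  ultimately show ?thesis by blast
qed

lemma g_cblip:
  assumes f: "f \<in> borel_measurable M" and phi: "cblip (d + 1) \<phi>"
  shows "cblip d (\<lambda>u. sublin_E P (\<lambda>\<omega>. \<phi> (u @ [f \<omega>])))"
proof -
  obtain B L where L0: "0 \<le> L" and B: "\<And>x. length x = d + 1 \<Longrightarrow> \<bar>\<phi> x\<bar> \<le> B"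
    and L: "\<And>x y. length x = d + 1 \<Longrightarrow> length y = d + 1 \<Longrightarrow> \<bar>\<phi> x - \<phi> y\<bar> \<le> L * list_dist x y"
    using cblip_nonneg[OF phi] by blast
  have meas: "(\<lambda>\<omega>. \<phi> (u @ [f \<omega>])) \<in> borel_measurable M" if "length u = d" for u
  proof -
    have "continuous_on UNIV (\<lambda>t. \<phi> (u @ [t]))"
    proof (rule lip_continuous[OF L0])
      fix s t
      show "\<bar>\<phi> (u @ [s]) - \<phi> (u @ [t])\<bar> \<le> L * \<bar>s - t\<bar>"
        using L[of "u @ [s]" "u @ [t]"] that by (simp add: list_dist_single)
    qed
    from measurable_compose[OF f borel_measurable_continuous_onI[OF this]]
    show ?thesis by simp
  qed
  have ib: "integrable Q (\<lambda>\<omega>. \<phi> (u @ [f \<omega>])) \<and> \<bar>integral\<^sup>L Q (\<lambda>\<omega>. \<phi> (u @ [f \<omega>]))\<bar> \<le> B"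
    if "Q \<in> P" "length u = d" for Q u
    by (rule int_bound[OF that(1) meas[OF that(2)]]) (use that B in auto)
  show ?thesis
  proof (rule cblipI[where B=B and L=L])
    fix x :: "real list" assume "length x = d"
    thus "\<bar>sublin_E P (\<lambda>\<omega>. \<phi> (x @ [f \<omega>]))\<bar> \<le> B"
      unfolding sublin_E_def using ib by (intro sup_bound) blast
  next
    fix x y :: "real list" assume xy: "length x = d" "length y = d"
    show "\<bar>sublin_E P (\<lambda>\<omega>. \<phi> (x @ [f \<omega>])) - sublin_E P (\<lambda>\<omega>. \<phi> (y @ [f \<omega>]))\<bar> \<le> L * list_dist x y"
      unfolding sublin_E_def
    proof (rule sup_diff[where B=B])
      fix Q assume Q: "Q \<in> P"
      show "\<bar>integral\<^sup>L Q (\<lambda>\<omega>. \<phi> (x @ [f \<omega>]))\<bar> \<le> B" using ib[OF Q xy(1)] by blast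
      show "\<bar>integral\<^sup>L Q (\<lambda>\<omega>. \<phi> (y @ [f \<omega>]))\<bar> \<le> B" using ib[OF Q xy(2)] by blast
      have "integral\<^sup>L Q (\<lambda>\<omega>. \<phi> (x @ [f \<omega>])) - integral\<^sup>L Q (\<lambda>\<omega>. \<phi> (y @ [f \<omega>]))
          = integral\<^sup>L Q (\<lambda>\<omega>. \<phi> (x @ [f \<omega>]) - \<phi> (y @ [f \<omega>]))"
        using ib[OF Q xy(1)] ib[OF Q xy(2)] by (simp add: Bochner_Integration.integral_diff)
      also have "\<bar>\<dots>\<bar> \<le> L * list_dist x y"
      proof (rule conjunct2[OF int_bound[OF Q]])
        show "(\<lambda>\<omega>. \<phi> (x @ [f \<omega>]) - \<phi> (y @ [f \<omega>])) \<in> borel_measurable M"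
          using meas xy by (intro borel_measurable_diff) auto
        fix \<omega>
        show "\<bar>\<phi> (x @ [f \<omega>]) - \<phi> (y @ [f \<omega>])\<bar> \<le> L * list_dist x y"
          using L[of "x @ [f \<omega>]" "y @ [f \<omega>]"] xy by (simp add: list_dist_append_right)
      qed
      finally show "\<bar>integral\<^sup>L Q (\<lambda>\<omega>. \<phi> (x @ [f \<omega>])) - integral\<^sup>L Q (\<lambda>\<omega>. \<phi> (y @ [f \<omega>]))\<bar> \<le> L * list_dist x y" .
    qed
  qed
qed

end

lemma proj_right:
  assumes "sl_indep P X m (\<lambda>\<omega>. Y \<omega> @ Z \<omega>) (k + l)" "\<And>\<omega>. length (X \<omega>) = m"
    "\<And>\<omega>. length (Y \<omega>) = k" "\<And>\<omega>. length (Z \<omega>) = l"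
  shows "sl_indep P X m Y k"
  unfolding sl_indep_def
proof (intro allI impI)
  fix \<phi> assume "cblip (m + k) \<phi>"
  hence c: "cblip (m + (k + l)) (\<lambda>u. \<phi> (take (m + k) u))" by (rule cblip_take) simp
  have e1: "\<And>\<omega> \<omega>'. \<phi> (take (m + k) (X \<omega> @ Y \<omega>' @ Z \<omega>')) = \<phi> (X \<omega> @ Y \<omega>')"
    using assms(2-4) by simp
  from assms(1)[unfolded sl_indep_def, rule_format, OF c]
  show "sublin_E P (\<lambda>\<omega>. \<phi> (X \<omega> @ Y \<omega>)) = sublin_E P (\<lambda>\<omega>. sublin_E P (\<lambda>\<omega>'. \<phi> (X \<omega> @ Y \<omega>')))"
    by (simp only: e1)
qed

lemma proj_left:
  assumes "sl_indep P (\<lambda>\<omega>. X \<omega> @ Y \<omega>) (m + k) Z l" "\<And>\<omega>. length (X \<omega>) = m"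
    "\<And>\<omega>. length (Y \<omega>) = k"
  shows "sl_indep P Y k Z l"
  unfolding sl_indep_def
proof (intro allI impI)
  fix \<phi> assume "cblip (k + l) \<phi>"
  hence c: "cblip (m + k + l) (\<lambda>u. \<phi> (drop m u))" using cblip_drop[of "k + l" \<phi> m] by (simp add: add.assoc)
  have e1: "\<And>\<omega> \<omega>'. \<phi> (drop m ((X \<omega> @ Y \<omega>) @ Z \<omega>')) = \<phi> (Y \<omega> @ Z \<omega>')"
    using assms(2-3) by simp
  from assms(1)[unfolded sl_indep_def, rule_format, OF c]
  show "sublin_E P (\<lambda>\<omega>. \<phi> (Y \<omega> @ Z \<omega>)) = sublin_E P (\<lambda>\<omega>. sublin_E P (\<lambda>\<omega>'. \<phi> (Y \<omega> @ Z \<omega>')))"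
    by (simp only: e1)
qed

context slE begin

lemma comp1:
  assumes h1: "sl_indep P X m Y k" and h2: "sl_indep P (\<lambda>\<omega>. X \<omega> @ Y \<omega>) (m + k) (\<lambda>\<omega>. [f \<omega>]) 1"
    and f: "f \<in> borel_measurable M" and lX: "\<And>\<omega>. length (X \<omega>) = m" and lY: "\<And>\<omega>. length (Y \<omega>) = k"
  shows "sl_indep P X m (\<lambda>\<omega>. Y \<omega> @ [f \<omega>]) (k + 1)"
  unfolding sl_indep_def
proof (intro allI impI)
  fix \<phi> assume phi: "cblip (m + (k + 1)) \<phi>"
  define g where "g u = sublin_E P (\<lambda>\<omega>'. \<phi> (u @ [f \<omega>']))" for u
  have cg: "cblip (m + k) g" unfolding g_def using g_cblip[OF f, of "m+k" \<phi>] phi by (simp add: add.assoc)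
  have hYZ: "sl_indep P Y k (\<lambda>\<omega>. [f \<omega>]) 1" by (rule proj_left[OF h2 lX lY])
  have e1: "sublin_E P (\<lambda>\<omega>. \<phi> (X \<omega> @ Y \<omega> @ [f \<omega>])) = sublin_E P (\<lambda>\<omega>. g (X \<omega> @ Y \<omega>))"
    using h2[unfolded sl_indep_def, rule_format, of \<phi>] phi unfolding g_def by (simp add: add.assoc)
  have e2: "sublin_E P (\<lambda>\<omega>. g (X \<omega> @ Y \<omega>)) = sublin_E P (\<lambda>\<omega>. sublin_E P (\<lambda>\<omega>'. g (X \<omega> @ Y \<omega>')))"
    using h1[unfolded sl_indep_def, rule_format, OF cg] .
  have e3: "sublin_E P (\<lambda>\<omega>'. g (X \<omega> @ Y \<omega>')) = sublin_E P (\<lambda>\<omega>'. \<phi> (X \<omega> @ Y \<omega>' @ [f \<omega>']))" for \<omega>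
  proof -
    have cx: "cblip (k + 1) (\<lambda>u. \<phi> (X \<omega> @ u))" by (rule cblip_prefix[OF phi lX])
    show ?thesis using hYZ[unfolded sl_indep_def, rule_format, OF cx] unfolding g_def by simp
  qed
  show "sublin_E P (\<lambda>\<omega>. \<phi> (X \<omega> @ Y \<omega> @ [f \<omega>])) = sublin_E P (\<lambda>\<omega>. sublin_E P (\<lambda>\<omega>'. \<phi> (X \<omega> @ Y \<omega>' @ [f \<omega>'])))"
    using e1 e2 e3 by simp
qed

lemma comp2:
  assumes h1: "sl_indep P X m (\<lambda>\<omega>. Y \<omega> @ [f \<omega>]) (k + 1)" and h2: "sl_indep P Y k (\<lambda>\<omega>. [f \<omega>]) 1"
    and f: "f \<in> borel_measurable M" and lX: "\<And>\<omega>. length (X \<omega>) = m" and lY: "\<And>\<omega>. length (Y \<omega>) = k"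
  shows "sl_indep P (\<lambda>\<omega>. X \<omega> @ Y \<omega>) (m + k) (\<lambda>\<omega>. [f \<omega>]) 1"
  unfolding sl_indep_def
proof (intro allI impI)
  fix \<phi> assume phi: "cblip (m + k + 1) \<phi>"
  hence phi': "cblip (m + (k + 1)) \<phi>" by (simp add: add.assoc)
  define g where "g u = sublin_E P (\<lambda>\<omega>'. \<phi> (u @ [f \<omega>']))" for u
  have cg: "cblip (m + k) g" unfolding g_def using g_cblip[OF f, of "m+k" \<phi>] phi by simp
  have hXY: "sl_indep P X m Y k" by (rule proj_right[OF h1 lX lY]) simp
  have e1: "sublin_E P (\<lambda>\<omega>. \<phi> ((X \<omega> @ Y \<omega>) @ [f \<omega>])) = sublin_E P (\<lambda>\<omega>. sublin_E P (\<lambda>\<omega>'. \<phi> (X \<omega> @ Y \<omega>' @ [f \<omega>'])))"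
    using h1[unfolded sl_indep_def, rule_format, OF phi'] by simp
  have e2: "sublin_E P (\<lambda>\<omega>. g (X \<omega> @ Y \<omega>)) = sublin_E P (\<lambda>\<omega>. sublin_E P (\<lambda>\<omega>'. g (X \<omega> @ Y \<omega>')))"
    using hXY[unfolded sl_indep_def, rule_format, OF cg] .
  have e3: "sublin_E P (\<lambda>\<omega>'. g (X \<omega> @ Y \<omega>')) = sublin_E P (\<lambda>\<omega>'. \<phi> (X \<omega> @ Y \<omega>' @ [f \<omega>']))" for \<omega>
  proof -
    have cx: "cblip (k + 1) (\<lambda>u. \<phi> (X \<omega> @ u))" by (rule cblip_prefix[OF phi' lX])
    show ?thesis using h2[unfolded sl_indep_def, rule_format, OF cx] unfolding g_def by simp
  qed
  have e4: "sublin_E P (\<lambda>\<omega>. sublin_E P (\<lambda>\<omega>'. \<phi> ((X \<omega> @ Y \<omega>) @ [f \<omega>']))) = sublin_E P (\<lambda>\<omega>. g (X \<omega> @ Y \<omega>))"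
    unfolding g_def ..
  show "sublin_E P (\<lambda>\<omega>. \<phi> ((X \<omega> @ Y \<omega>) @ [f \<omega>])) = sublin_E P (\<lambda>\<omega>. sublin_E P (\<lambda>\<omega>'. \<phi> ((X \<omega> @ Y \<omega>) @ [f \<omega>'])))"
    unfolding e1 e4 e2 e3 ..
qed

end

theorem mainTheorem8:
  fixes M :: "'w measure" and P :: "'w measure set"
    and V \<epsilon> :: "nat \<Rightarrow> 'w \<Rightarrow> real" and n :: nat and lo hi :: real
  assumes P_nonempty: "P \<noteq> {}"
    and P_prob: "\<And>Q. Q \<in> P \<Longrightarrow> prob_space Q \<and> sets Q = sets M \<and> space Q = space M"
    and V_meas: "\<And>i. i \<in> {1..n} \<Longrightarrow> V i \<in> borel_measurable M"
    and e_meas: "\<And>i. i \<in> {1..n} \<Longrightarrow> \<epsilon> i \<in> borel_measurable M"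
    and sig: "0 \<le> lo" "lo \<le> hi"
    and V_dist: "\<And>i. i \<in> {1..n} \<Longrightarrow> maximal_distributed P (V i) lo hi"
    and e_dist: "\<And>i. i \<in> {1..n} \<Longrightarrow> std_normal_distributed P (\<epsilon> i)"
  shows "seq_indep P
            (\<lambda>k \<omega>. if odd k then [V ((k + 1) div 2) \<omega>] else [\<epsilon> (k div 2) \<omega>])
            (\<lambda>_. 1) (2 * n)
         \<longleftrightarrow>
         (seq_indep P (\<lambda>i \<omega>. [V i \<omega>, \<epsilon> i \<omega>]) (\<lambda>_. 2) n \<and>
          (\<forall>i\<in>{1..n}. sl_indep P (\<lambda>\<omega>. [V i \<omega>]) 1 (\<lambda>\<omega>. [\<epsilon> i \<omega>]) 1))"
proof -
  interpret slE P M using P_nonempty P_prob by unfold_locales auto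
  define A where "A = (\<lambda>k \<omega>. if odd k then [V ((k + 1) div 2) \<omega>] else [\<epsilon> (k div 2) \<omega>])"
  define B where "B = (\<lambda>i \<omega>. [V i \<omega>, \<epsilon> i \<omega>])"
  define PA where "PA = (\<lambda>j \<omega>. concat (map (\<lambda>k. A k \<omega>) [1..<j+1]))"
  define PB where "PB = (\<lambda>i \<omega>. concat (map (\<lambda>k. B k \<omega>) [1..<i+1]))"
  have PA_Suc: "PA (Suc j) \<omega> = PA j \<omega> @ A (Suc j) \<omega>" for j \<omega> unfolding PA_def by simp
  have PB_Suc: "PB (Suc i) \<omega> = PB i \<omega> @ B (Suc i) \<omega>" for i \<omega> unfolding PB_def by simp
  have A_odd: "A (Suc (2*i)) = (\<lambda>\<omega>. [V (Suc i) \<omega>])" for i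
    unfolding A_def by simp
  have A_even: "A (Suc (Suc (2*i))) = (\<lambda>\<omega>. [\<epsilon> (Suc i) \<omega>])" for i
    unfolding A_def by simp
  have PA_even: "PA (2*i) = PB i" for i
  proof (induction i)
    case 0 show ?case unfolding PA_def PB_def by simp
  next
    case (Suc i)
    have "PA (2 * Suc i) \<omega> = PB (Suc i) \<omega>" for \<omega>
    proof -
      have "PA (2 * Suc i) \<omega> = (PA (2*i) \<omega> @ A (Suc (2*i)) \<omega>) @ A (Suc (Suc (2*i))) \<omega>"
        using PA_Suc[of "Suc (2*i)" \<omega>] PA_Suc[of "2*i" \<omega>] by simp
      also have "\<dots> = PB (Suc i) \<omega>"
        unfolding Suc.IH A_odd A_even PB_Suc B_def by simp
      finally show ?thesis .
    qed
    thus ?case by blast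
  qed
  have PA_odd: "PA (Suc (2*i)) = (\<lambda>\<omega>. PB i \<omega> @ [V (Suc i) \<omega>])" for i
  proof
    fix \<omega>
    show "PA (Suc (2*i)) \<omega> = PB i \<omega> @ [V (Suc i) \<omega>]" unfolding PA_Suc PA_even A_odd by simp
  qed
  have lPB: "length (PB i \<omega>) = 2*i" for i \<omega>
    by (induction i) (simp_all add: PB_Suc B_def, simp add: PB_def)
  have SA: "seq_indep P A (\<lambda>_. 1) (2*n) \<longleftrightarrow> (\<forall>j. 1 \<le> j \<and> j < 2*n \<longrightarrow> sl_indep P (PA j) j (A (Suc j)) 1)"
    unfolding seq_indep_def PA_def by simp
  have SB: "seq_indep P B (\<lambda>_. 2) n \<longleftrightarrow> (\<forall>i. 1 \<le> i \<and> i < n \<longrightarrow> sl_indep P (PB i) (2*i) (B (Suc i)) 2)"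
    unfolding seq_indep_def PB_def by (simp add: mult.commute)
  have main: "seq_indep P A (\<lambda>_. 1) (2*n) \<longleftrightarrow>
      (seq_indep P B (\<lambda>_. 2) n \<and> (\<forall>i\<in>{1..n}. sl_indep P (\<lambda>\<omega>. [V i \<omega>]) 1 (\<lambda>\<omega>. [\<epsilon> i \<omega>]) 1))"
  proof
    assume "seq_indep P A (\<lambda>_. 1) (2*n)"
    hence H: "\<And>j. 1 \<le> j \<Longrightarrow> j < 2*n \<Longrightarrow> sl_indep P (PA j) j (A (Suc j)) 1" unfolding SA by blast
    have H1: "sl_indep P (PB i) (2*i) (\<lambda>\<omega>. [V (Suc i) \<omega>]) 1" if "1 \<le> i" "i < n" for i
      using H[of "2*i"] that by (simp add: PA_even A_odd)
    have H2: "sl_indep P (\<lambda>\<omega>. PB i \<omega> @ [V (Suc i) \<omega>]) (2*i+1) (\<lambda>\<omega>. [\<epsilon> (Suc i) \<omega>]) 1" if "i < n" for i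
      using H[of "Suc (2*i)"] that by (simp add: PA_odd A_even)
    have "seq_indep P B (\<lambda>_. 2) n"
      unfolding SB
    proof (intro allI impI)
      fix i assume i: "1 \<le> i \<and> i < n"
      have "sl_indep P (PB i) (2*i) (\<lambda>\<omega>. [V (Suc i) \<omega>] @ [\<epsilon> (Suc i) \<omega>]) (1+1)"
        by (rule comp1[OF H1 H2]) (use i e_meas lPB in auto)
      thus "sl_indep P (PB i) (2*i) (B (Suc i)) 2" by (simp add: B_def numeral_2_eq_2)
    qed
    moreover have "\<forall>i\<in>{1..n}. sl_indep P (\<lambda>\<omega>. [V i \<omega>]) 1 (\<lambda>\<omega>. [\<epsilon> i \<omega>]) 1"
    proof
      fix i assume i: "i \<in> {1..n}"
      then obtain i' where i': "i = Suc i'" by (cases i) auto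
      have "sl_indep P (\<lambda>\<omega>. PB i' \<omega> @ [V (Suc i') \<omega>]) (2*i'+1) (\<lambda>\<omega>. [\<epsilon> (Suc i') \<omega>]) 1"
        using H2[of i'] i i' by simp
      from proj_left[OF this lPB] show "sl_indep P (\<lambda>\<omega>. [V i \<omega>]) 1 (\<lambda>\<omega>. [\<epsilon> i \<omega>]) 1"
        using i' by simp
    qed
    ultimately show "seq_indep P B (\<lambda>_. 2) n \<and> (\<forall>i\<in>{1..n}. sl_indep P (\<lambda>\<omega>. [V i \<omega>]) 1 (\<lambda>\<omega>. [\<epsilon> i \<omega>]) 1)"
      by blast
  next
    assume "seq_indep P B (\<lambda>_. 2) n \<and> (\<forall>i\<in>{1..n}. sl_indep P (\<lambda>\<omega>. [V i \<omega>]) 1 (\<lambda>\<omega>. [\<epsilon> i \<omega>]) 1)"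
    hence F1: "\<And>i. 1 \<le> i \<Longrightarrow> i < n \<Longrightarrow> sl_indep P (PB i) (2*i) (\<lambda>\<omega>. [V (Suc i) \<omega>] @ [\<epsilon> (Suc i) \<omega>]) (1+1)"
      and F2: "\<And>i. i \<in> {1..n} \<Longrightarrow> sl_indep P (\<lambda>\<omega>. [V i \<omega>]) 1 (\<lambda>\<omega>. [\<epsilon> i \<omega>]) 1"
      unfolding SB by (auto simp: B_def numeral_2_eq_2)
    show "seq_indep P A (\<lambda>_. 1) (2*n)"
      unfolding SA
    proof (intro allI impI)
      fix j assume j: "1 \<le> j \<and> j < 2*n"
      have "j = 2*(j div 2) \<or> j = Suc (2*(j div 2))" by presburger
      then obtain i where "j = 2*i \<or> j = Suc (2*i)" by blast
      then show "sl_indep P (PA j) j (A (Suc j)) 1"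
      proof
        assume ji: "j = 2*i"
        hence i: "1 \<le> i" "i < n" using j by auto
        have "sl_indep P (PB i) (2*i) (\<lambda>\<omega>. [V (Suc i) \<omega>]) 1"
          by (rule proj_right[OF F1[OF i]]) (use lPB in auto)
        thus ?thesis using ji by (simp add: PA_even A_odd)
      next
        assume ji: "j = Suc (2*i)"
        hence i: "i < n" using j by auto
        show ?thesis
        proof (cases "i = 0")
          case True
          have "sl_indep P (PA (Suc (2*i))) (Suc (2*i)) (A (Suc (Suc (2*i)))) 1"
            unfolding PA_odd A_even using True F2[of 1] i by (simp add: PB_def)
          thus ?thesis using ji by simp
        next
          case False
          have "sl_indep P (\<lambda>\<omega>. PB i \<omega> @ [V (Suc i) \<omega>]) (2*i+1) (\<lambda>\<omega>. [\<epsilon> (Suc i) \<omega>]) 1"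
            by (rule comp2[OF F1[of i] F2[of "Suc i"]]) (use False i e_meas lPB in auto)
          thus ?thesis using ji by (simp add: PA_odd A_even)
        qed
      qed
    qed
  qed
  thus ?thesis unfolding A_def B_def .
qed

end
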